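(* Let $s<1$, $r\le0$ and $N\gg1$. The multipliers $\sigma_\pm(\xi_1,\xi_2)$ defined below satisfy, with implicit constants independent of $N$: (1) if $|\xi_1|\gg|\xi_2|$, then $|\sigma_\pm(\xi_1,\xi_2)-m_{1-s,N}(\xi_1)^2|\lesssim \frac{|\xi_2|^2}{|\xi_1|^2}+\frac{1}{|\xi_1|}$; (2) if $|\xi_1|\sim|\xi_2|$, then $|\sigma_\pm(\xi_1,\xi_2)|\lesssim 1$.
   Context: For $q\ge0$ and $N\gg1$, $m_{q,N}\in C^\infty(\mathbb{R}^2)$ is a radial function, non-increasing in $|\xi|$, with $m_{q,N}(\xi)=1$ for $|\xi|<N$ and $m_{q,N}(\xi)=(N/|\xi|)^q$ for $|\xi|>2N$. Write $\xi_{12}=\xi_1+\xi_2$, $m_{1-s,j}=m_{1-s,N}(\xi_j)$, $m_{-r,12}=m_{-r,N}(\xi_{12})$. Define \[ \sigma^Z_\pm(\xi_1,\xi_2):=\frac{|\xi_1|^2m_{1-s,1}^2-|\xi_2|^2m_{1-s,2}^2\pm|\xi_{12}|m_{-r,12}^2}{|\xi_1|^2-|\xi_2|^2\pm|\xi_{12}|},\qquad \sigma^S(\xi_1,\xi_2):=\frac{|\xi_1|^2m_{1-s,1}^2-|\xi_2|^2m_{1-s,2}^2}{|\xi_1|^2-|\xi_2|^2}, \] and $\sigma_\pm(\xi_1,\xi_2):=\sigma^Z_\pm(\xi_1,\xi_2)$ if $\big||\xi_1|^2-|\xi_2|^2\big|>2|\xi_{12}|$, and $\sigma_\pm(\xi_1,\xi_2):=\sigma^S(\xi_1,\xi_2)$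 if $\big||\xi_1|^2-|\xi_2|^2\big|\le2|\xi_{12}|$ (with $\sigma^S$ extended by continuity where $|\xi_1|=|\xi_2|$). The variables $\xi_1,\xi_2$ range over $\mathbb{R}^2$ or over the lattice $\gamma_1^{-1}\mathbb{Z}\times\gamma_2^{-1}\mathbb{Z}$. "$A\gg B$" means $A\ge CB$ for a sufficiently large absolute constant $C$; "$A\sim B$" means $C^{-1}B\le A\le CB$. *)

theory Defs
  imports "HOL-Analysis.Analysis"
begin

definition smooth_real :: "(real \<Rightarrow> real) \<Rightarrow> bool" where
  "smooth_real f \<longleftrightarrow> (\<forall>k x. ((deriv ^^ k) f) differentiable (at x))"

text \<open>Radial profile rho of the multiplier m_{q,N}(xi) = rho(|xi|/N):
  smooth, non-increasing, equal to 1 below 1 and to t^(-q) above 2.\<close>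
definition admissible_profile :: "real \<Rightarrow> (real \<Rightarrow> real) \<Rightarrow> bool" where
  "admissible_profile q \<rho> \<longleftrightarrow>
     smooth_real \<rho> \<and>
     (\<forall>x y. x \<le> y \<longrightarrow> \<rho> y \<le> \<rho> x) \<and>
     (\<forall>t. t < 1 \<longrightarrow> \<rho> t = 1) \<and>
     (\<forall>t. t > 2 \<longrightarrow> \<rho> t = t powr (- q))"

definition mult :: "(real \<Rightarrow> real) \<Rightarrow> real \<Rightarrow> real^2 \<Rightarrow> real" where
  "mult \<rho> N \<xi> = \<rho> (norm \<xi> / N)"

text \<open>sigma^Z_pm, pm = 1 or -1; rho1 is the profile of m_{1-s,N}, rho2 that of m_{-r,N}.\<close>
definition sigmaZ :: "(real \<Rightarrow> real) \<Rightarrow> (real \<Rightarrow> real) \<Rightarrow> real \<Rightarrow> real \<Rightarrow> real^2 \<Rightarrow> real^2 \<Rightarrow> real" where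
  "sigmaZ \<rho>1 \<rho>2 N pm \<xi>1 \<xi>2 =
     (norm \<xi>1 ^ 2 * (mult \<rho>1 N \<xi>1)\<^sup>2 - norm \<xi>2 ^ 2 * (mult \<rho>1 N \<xi>2)\<^sup>2
        + pm * norm (\<xi>1 + \<xi>2) * (mult \<rho>2 N (\<xi>1 + \<xi>2))\<^sup>2)
     / (norm \<xi>1 ^ 2 - norm \<xi>2 ^ 2 + pm * norm (\<xi>1 + \<xi>2))"

text \<open>sigma^S, extended by continuity on |xi1| = |xi2|: there it is the derivative
  of u \<mapsto> u * m(sqrt u)^2 at u = |xi1|^2 (the limit of the difference quotient).\<close>
definition sigmaS :: "(real \<Rightarrow> real) \<Rightarrow> real \<Rightarrow> real^2 \<Rightarrow> real^2 \<Rightarrow> real" where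
  "sigmaS \<rho>1 N \<xi>1 \<xi>2 =
     (if norm \<xi>1 = norm \<xi>2
      then deriv (\<lambda>u. u * (\<rho>1 (sqrt u / N))\<^sup>2) (norm \<xi>1 ^ 2)
      else (norm \<xi>1 ^ 2 * (mult \<rho>1 N \<xi>1)\<^sup>2 - norm \<xi>2 ^ 2 * (mult \<rho>1 N \<xi>2)\<^sup>2)
           / (norm \<xi>1 ^ 2 - norm \<xi>2 ^ 2))"

definition sigma :: "(real \<Rightarrow> real) \<Rightarrow> (real \<Rightarrow> real) \<Rightarrow> real \<Rightarrow> real \<Rightarrow> real^2 \<Rightarrow> real^2 \<Rightarrow> real" where
  "sigma \<rho>1 \<rho>2 N pm \<xi>1 \<xi>2 =
     (if \<bar>norm \<xi>1 ^ 2 - norm \<xi>2 ^ 2\<bar> > 2 * norm (\<xi>1 + \<xi>2)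
      then sigmaZ \<rho>1 \<rho>2 N pm \<xi>1 \<xi>2 else sigmaS \<rho>1 N \<xi>1 \<xi>2)"

end

theory Submission
  imports Defs
begin


lemma rho_le1: assumes "admissible_profile q \<rho>" shows "\<rho> t \<le> 1"
proof (cases "t < 1")
  case True thus ?thesis using assms unfolding admissible_profile_def by auto
next
  case False
  have m: "\<forall>x y. x \<le> y \<longrightarrow> \<rho> y \<le> \<rho> x" using assms unfolding admissible_profile_def by auto
  then have "\<rho> t \<le> \<rho> 0" using False by auto
  also have "\<rho> 0 = 1" using assms unfolding admissible_profile_def by auto
  finally show ?thesis .
qed

lemma rho_ge0: assumes "admissible_profile q \<rho>" shows "0 \<le> \<rho> t"
proof -
  define t' where "t' = max t 3"
  have m: "\<forall>x y. x \<le> y \<longrightarrow> \<rho> y \<le> \<rho> x" using assms unfolding admissible_profile_def by auto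
  have "\<rho> t' \<le> \<rho> t" using m unfolding t'_def by auto
  moreover have "\<rho> t' = t' powr (-q)" using assms unfolding admissible_profile_def t'_def by auto
  moreover have "t' powr (-q) \<ge> 0" by simp
  ultimately show ?thesis by linarith
qed

lemma rho_deriv: assumes "admissible_profile q \<rho>" shows "DERIV \<rho> t :> deriv \<rho> t"
proof -
  have "((deriv ^^ 0) \<rho>) differentiable (at t)" using assms unfolding admissible_profile_def smooth_real_def by blast
  thus ?thesis by (simp add: DERIV_deriv_iff_real_differentiable)
qed

lemma rho_deriv_cont: assumes "admissible_profile q \<rho>" shows "continuous_on S (deriv \<rho>)"
proof -
  have "\<forall>x. ((deriv ^^ 1) \<rho>) differentiable (at x)" using assms unfolding admissible_profile_def smooth_real_def by blast
  hence "\<forall>x. isCont (deriv \<rho>) x" by (simp add: differentiable_imp_continuous_within)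
  thus ?thesis by (simp add: continuous_at_imp_continuous_on)
qed

lemma rho_tderiv_bound: assumes "admissible_profile q \<rho>" "q \<ge> 0"
  shows "\<exists>B\<ge>0. \<forall>t>0. \<bar>t * deriv \<rho> t\<bar> \<le> B"
proof -
  have "compact (deriv \<rho> ` {0..2})" by (rule compact_continuous_image[OF rho_deriv_cont[OF assms(1)] compact_Icc])
  then obtain M where M: "\<forall>x\<in>{0..2}. \<bar>deriv \<rho> x\<bar> \<le> M"
    using compact_imp_bounded bounded_iff by (metis imageI real_norm_def)
  have big: "deriv \<rho> t = -q * t powr (-q-1)" if "t > 2" for t
  proof -
    have "((\<lambda>t. t powr (-q)) has_real_derivative (-q) * t powr (-q - 1)) (at t)"
      using has_real_derivative_powr[of t "-q"] that by simp
    then have "(\<rho> has_real_derivative (-q) * t powr (-q-1)) (at t)"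
      by (rule has_field_derivative_transform_within_open[where S="{2<..}"]) (use that assms in \<open>auto simp: admissible_profile_def\<close>)
    thus ?thesis by (rule DERIV_imp_deriv)
  qed
  have M0: "M \<ge> 0" using M by force
  show ?thesis
  proof (intro exI[of _ "max (2*M) q"] conjI allI impI)
    show "0 \<le> max (2*M) q" using M0 by simp
    fix t :: real assume t: "t > 0"
    show "\<bar>t * deriv \<rho> t\<bar> \<le> max (2*M) q"
    proof (cases "t \<le> 2")
      case True
      then have "\<bar>deriv \<rho> t\<bar> \<le> M" using M t by auto
      then have "\<bar>t * deriv \<rho> t\<bar> \<le> 2 * M" using True t
        by (simp add: abs_mult mult_mono')
      thus ?thesis by simp
    next
      case False
      then have "t * deriv \<rho> t = -q * (t * t powr (-q-1))" using big by simp
      also have "\<dots> = -q * t powr (-q)" using t by (simp add: powr_mult_base)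
      finally have e: "\<bar>t * deriv \<rho> t\<bar> = q * t powr (-q)" using assms(2) by simp
      have "t powr q \<ge> 1" using False assms(2) by (simp add: ge_one_powr_ge_zero)
      hence "t powr (-q) \<le> 1" by (simp add: powr_minus divide_simps)
      hence "q * t powr (-q) \<le> q" using assms(2) by (simp add: mult_left_le)
      thus ?thesis using e by simp
    qed
  qed
qed

lemma f_deriv:
  assumes "admissible_profile q \<rho>" "q \<ge> 0"
  shows "\<exists>L\<ge>0. \<forall>N>0. \<forall>u\<ge>0. DERIV (\<lambda>u. u * (\<rho> (sqrt u / N))\<^sup>2) u :> deriv (\<lambda>u. u * (\<rho> (sqrt u / N))\<^sup>2) u
        \<and> \<bar>deriv (\<lambda>u. u * (\<rho> (sqrt u / N))\<^sup>2) u\<bar> \<le> L"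
proof -
  obtain B where B: "B \<ge> 0" "\<forall>t>0. \<bar>t * deriv \<rho> t\<bar> \<le> B" using rho_tderiv_bound[OF assms] by blast
  show ?thesis
  proof (intro exI[of _ "1+B"] conjI allI impI)
    show "0 \<le> 1+B" using B by simp
    fix N u :: real assume N: "N > 0" and u: "u \<ge> 0"
    define f where "f = (\<lambda>u. u * (\<rho> (sqrt u / N))\<^sup>2)"
    have "\<exists>D. DERIV f u :> D \<and> \<bar>D\<bar> \<le> 1 + B"
    proof (cases "u = 0")
      case True
      have eq: "f v = v" if "v \<in> {..<N\<^sup>2}" for v
      proof -
        have "sqrt v < N"
        proof (cases "v < 0")
          case True then have "sqrt v < 0" by (simp add: real_sqrt_lt_0_iff)
          then show ?thesis using N by linarith
        next
          case False then show ?thesis using that N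
            by (metis abs_of_pos lessThan_iff real_sqrt_abs real_sqrt_less_iff)
        qed
        then have "sqrt v / N < 1" using N by simp
        then show ?thesis using assms(1) unfolding f_def admissible_profile_def by simp
      qed
      have "DERIV (\<lambda>v. v) u :> 1" by simp
      then have "DERIV f u :> 1"
        by (rule has_field_derivative_transform_within_open[where S="{..<N\<^sup>2}"]) (use eq True N in auto)
      then show ?thesis using B by auto
    next
      case False
      then have u0: "u > 0" using u by simp
      define t where "t = sqrt u / N"
      have d1: "DERIV (\<lambda>v. sqrt v / N) u :> inverse (sqrt u) / 2 / N"
        using u0 N by (auto intro!: derivative_eq_intros)
      have d2: "DERIV (\<lambda>v. \<rho> (sqrt v / N)) u :> deriv \<rho> t * (inverse (sqrt u) / 2 / N)"
        using DERIV_chain2[OF rho_deriv[OF assms(1), of "sqrt u / N"] d1] unfolding t_def .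
      have d3: "DERIV f u :> 1 * (\<rho> t)\<^sup>2 + u * (2 * \<rho> t * (deriv \<rho> t * (inverse (sqrt u) / 2 / N)))"
        unfolding f_def power2_eq_square t_def
        by (rule derivative_eq_intros d2 | simp add: t_def)+
      have e: "u * (2 * \<rho> t * (deriv \<rho> t * (inverse (sqrt u) / 2 / N))) = \<rho> t * (t * deriv \<rho> t)"
      proof -
        have "u = sqrt u * sqrt u" using u by simp
        then show ?thesis unfolding t_def using u0 N by (simp add: field_simps)
      qed
      have "\<bar>(\<rho> t)\<^sup>2 + \<rho> t * (t * deriv \<rho> t)\<bar> \<le> 1 + B"
      proof -
        have r0: "0 \<le> \<rho> t" "\<rho> t \<le> 1" using rho_ge0[OF assms(1)] rho_le1[OF assms(1)] by auto
        have "t > 0" using u0 N unfolding t_def by simp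
        then have tb: "\<bar>t * deriv \<rho> t\<bar> \<le> B" using B(2) by blast
        have "(\<rho> t)\<^sup>2 \<le> 1" using r0 by (simp add: power_le_one)
        moreover have "\<bar>\<rho> t * (t * deriv \<rho> t)\<bar> \<le> 1 * B" unfolding abs_mult
          using r0 tb by (intro mult_mono) auto
        ultimately show ?thesis by (simp add: abs_triangle_ineq[THEN order_trans])
      qed
      then show ?thesis using d3 e by auto
    qed
    then obtain D where D: "DERIV f u :> D" "\<bar>D\<bar> \<le> 1 + B" by blast
    then show "DERIV f u :> deriv f u" "\<bar>deriv f u\<bar> \<le> 1 + B" unfolding f_def
      using DERIV_imp_deriv by (force simp: f_def)+
  qed
qed

lemma f_loc:
  assumes "admissible_profile q \<rho>" "N > 0" "v < N\<^sup>2"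
  shows "v * (\<rho> (sqrt v / N))\<^sup>2 = v"
proof -
  have "sqrt v < N"
  proof (cases "v < 0")
    case True then have "sqrt v < 0" by (simp add: real_sqrt_lt_0_iff)
    then show ?thesis using assms by linarith
  next
    case False then show ?thesis using assms
      by (metis abs_of_pos real_sqrt_abs real_sqrt_less_iff)
  qed
  then have "sqrt v / N < 1" using assms by simp
  then show ?thesis using assms(1) unfolding admissible_profile_def by simp
qed

lemma f_deriv0:
  assumes "admissible_profile q \<rho>" "N > 0"
  shows "deriv (\<lambda>u. u * (\<rho> (sqrt u / N))\<^sup>2) 0 = 1"
proof -
  have "DERIV (\<lambda>v. v) 0 :> 1" by simp
  then have "DERIV (\<lambda>u. u * (\<rho> (sqrt u / N))\<^sup>2) 0 :> 1"
    by (rule has_field_derivative_transform_within_open[where S="{..<N\<^sup>2}"]) (use f_loc[OF assms] assms in auto)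
  then show ?thesis by (rule DERIV_imp_deriv)
qed

lemma lip_from_deriv:
  fixes f :: "real \<Rightarrow> real"
  assumes "\<forall>u\<ge>0. DERIV f u :> deriv f u \<and> \<bar>deriv f u\<bar> \<le> L" "0 \<le> x" "0 \<le> y"
  shows "\<bar>f x - f y\<bar> \<le> L * \<bar>x - y\<bar>"
proof -
  have *: "\<bar>f b - f a\<bar> \<le> L * (b - a)" if "0 \<le> a" "a < b" for a b
  proof -
    have "\<And>x. a \<le> x \<Longrightarrow> x \<le> b \<Longrightarrow> DERIV f x :> deriv f x" using assms(1) that by auto
    from MVT2[OF \<open>a<b\<close> this] obtain z where z: "a < z" "z < b" "f b - f a = (b - a) * deriv f z"
      by blast
    have "\<bar>deriv f z\<bar> \<le> L" using assms(1) z that by auto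
    then show ?thesis using z that by (simp add: abs_mult mult_left_mono mult.commute)
  qed
  consider "x < y" | "x = y" | "y < x" by linarith
  then show ?thesis
  proof cases
    case 1 then show ?thesis using *[of x y] assms by (simp add: abs_minus_commute)
  next
    case 2 then show ?thesis by simp
  next
    case 3 then show ?thesis using *[of y x] assms by simp
  qed
qed


lemma Z1:
  fixes a b c x y z p :: real
  assumes "b \<ge> 0" "2*b \<le> a" "0 \<le> c" "c \<le> a + b" "2*c < \<bar>a^2-b^2\<bar>"
    "0 \<le> x" "x \<le> 1" "0 \<le> y" "y \<le> 1" "0 \<le> z" "z \<le> 1" "p = 1 \<or> p = -1"
  shows "\<bar>(a^2*x^2 - b^2*y^2 + p*c*z^2)/(a^2-b^2+p*c) - x^2\<bar> \<le> 8*(b^2/a^2 + 1/a)"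
proof -
  have a0: "a \<ge> 0" using assms by linarith
  have "(2*b)^2 \<le> a^2" by (rule power_mono) (use assms in auto)
  then have bb: "b^2 \<le> a^2/4" by simp
  have ab: "a^2 - b^2 \<ge> 3/4 * a^2" using bb by linarith
  have "a \<noteq> 0" proof assume "a = 0" then have "b = 0" using assms by linarith
    then have "\<bar>a^2-b^2\<bar> = 0" using \<open>a = 0\<close> by simp
    then show False using assms(3,5) by linarith qed
  then have apos: "a > 0" using a0 by simp
  have "a^2-b^2 \<ge> 0" using ab zero_le_power2[of a] by linarith
  then have absw: "\<bar>a^2-b^2\<bar> = a^2 - b^2" by (simp add: abs_of_nonneg)
  define D where "D = a^2-b^2+p*c"
  have pc: "p*c \<ge> -c" using assms(3,12) by auto
  have Dge: "D \<ge> 3/8 * a^2" using ab pc assms(5) absw unfolding D_def by linarith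
  have "a^2 > 0" using apos by simp
  then have Dpos: "D > 0" using Dge by linarith
  have eq0: "(a^2*x^2 - b^2*y^2 + p*c*z^2) - x^2*D = b^2*(x^2-y^2) + p*c*(z^2-x^2)"
    unfolding D_def by (simp add: algebra_simps)
  have "(a^2*x^2 - b^2*y^2 + p*c*z^2)/D - x^2 = ((a^2*x^2 - b^2*y^2 + p*c*z^2) - x^2*D)/D"
    using Dpos by (simp add: diff_divide_distrib)
  then have eq: "(a^2*x^2 - b^2*y^2 + p*c*z^2)/D - x^2 = (b^2*(x^2-y^2) + p*c*(z^2-x^2))/D"
    using eq0 by simp
  have "x^2 \<le> 1" "y^2 \<le> 1" "z^2 \<le> 1" using assms(6-11) by (simp_all add: power_le_one)
  moreover have "x^2 \<ge> 0" "y^2 \<ge> 0" "z^2 \<ge> 0" by simp_all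
  ultimately have x2: "\<bar>x^2-y^2\<bar> \<le> 1" "\<bar>z^2-x^2\<bar> \<le> 1" by linarith+
  have n1: "\<bar>b^2*(x^2-y^2)\<bar> \<le> b^2" using x2(1) by (simp add: abs_mult mult_left_le)
  have "\<bar>p\<bar> = 1" using assms(12) by auto
  then have "\<bar>p*c*(z^2-x^2)\<bar> = c*\<bar>z^2-x^2\<bar>" using assms(3) by (simp add: abs_mult)
  then have n2: "\<bar>p*c*(z^2-x^2)\<bar> \<le> c" using x2(2) assms(3) by (simp add: mult_left_le)
  have num: "\<bar>b^2*(x^2-y^2) + p*c*(z^2-x^2)\<bar> \<le> b^2 + 3/2*a" using n1 n2 assms(2,4) by linarith
  have "\<bar>(b^2*(x^2-y^2) + p*c*(z^2-x^2))/D\<bar> \<le> (b^2 + 3/2*a)/(3/8*a^2)"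
    unfolding abs_divide
  proof (rule frac_le)
    show "0 \<le> b^2 + 3/2*a" using apos by simp
    show "\<bar>b^2*(x^2-y^2) + p*c*(z^2-x^2)\<bar> \<le> b^2 + 3/2*a" by (rule num)
    show "0 < 3/8*a^2" using apos by simp
    show "3/8*a^2 \<le> \<bar>D\<bar>" using Dge Dpos by simp
  qed
  also have "\<dots> = 8/3*(b^2/a^2) + 4/a"
  proof -
    have "(b^2 + 3/2*a)/(3/8*a^2) = b^2/(3/8*a^2) + (3/2*a)/(3/8*a^2)" by (rule add_divide_distrib)
    also have "b^2/(3/8*a^2) = 8/3*(b^2/a^2)" by simp
    also have "(3/2*a)/(3/8*a^2) = 4/a" using apos by (simp add: power2_eq_square)
    finally show ?thesis .
  qed
  also have "\<dots> \<le> 8*(b^2/a^2 + 1/a)" using apos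
  proof -
    have g: "\<And>X Y::real. X \<ge> 0 \<Longrightarrow> Y \<ge> 0 \<Longrightarrow> 8/3*X + 4*Y \<le> 8*(X+Y)" unfolding distrib_left by linarith
    have "8/3*(b^2/a^2) + 4*(1/a) \<le> 8*(b^2/a^2 + 1/a)" by (rule g) (use apos in simp_all)
    then show ?thesis by simp
  qed
  finally have r: "\<bar>(b^2*(x^2-y^2) + p*c*(z^2-x^2))/D\<bar> \<le> 8*(b^2/a^2 + 1/a)" .
  have "\<bar>(a^2*x^2 - b^2*y^2 + p*c*z^2)/D - x^2\<bar> \<le> 8*(b^2/a^2 + 1/a)" by (simp only: eq r)
  then show ?thesis by (simp only: D_def)
qed

lemma Z2:
  fixes F w c z p L :: real
  assumes "\<bar>F\<bar> \<le> L*\<bar>w\<bar>" "2*c < \<bar>w\<bar>" "0 \<le> c" "0 \<le> z" "z \<le> 1" "p = 1 \<or> p = -1" "L \<ge> 0"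
  shows "\<bar>(F + p*c*z^2)/(w+p*c)\<bar> \<le> 2*L+1"
proof -
  have pc: "\<bar>p*c\<bar> = c" using assms(3,6) by auto
  have tri: "\<bar>w\<bar> - \<bar>p*c\<bar> \<le> \<bar>w + p*c\<bar>" using abs_triangle_ineq2[of w "-(p*c)"] by simp
  have D1a: "\<bar>w+p*c\<bar> \<ge> \<bar>w\<bar>/2" using tri pc assms(2) by linarith
  have D1b: "\<bar>w+p*c\<bar> \<ge> c" using tri pc assms(2) by linarith
  note D1 = D1a D1b
  have Dpos: "\<bar>w+p*c\<bar> > 0" using D1 assms(2,3) by linarith
  have z2: "z^2 \<le> 1" using assms(4,5) by (simp add: power_le_one)
  have "\<bar>p\<bar> = 1" using assms(6) by auto
  then have "\<bar>p*c*z^2\<bar> = c*z^2" using assms(3) by (simp add: abs_mult)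
  then have "\<bar>p*c*z^2\<bar> \<le> c" using z2 assms(3) by (simp add: mult_left_le)
  then have num: "\<bar>F + p*c*z^2\<bar> \<le> L*\<bar>w\<bar> + c" using assms(1) by linarith
  have "L*\<bar>w\<bar> \<le> L*(2*\<bar>w+p*c\<bar>)" using D1(1) assms(7) by (intro mult_left_mono) auto
  then have l: "L*\<bar>w\<bar> \<le> 2*L*\<bar>w+p*c\<bar>" by simp
  have "(2*L+1)*\<bar>w+p*c\<bar> = 2*L*\<bar>w+p*c\<bar> + \<bar>w+p*c\<bar>" by (simp add: distrib_right)
  then have "\<bar>F + p*c*z^2\<bar> \<le> (2*L+1)*\<bar>w+p*c\<bar>" using num D1(2) l by linarith
  then show ?thesis unfolding abs_divide using Dpos by (simp add: pos_divide_le_eq)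
qed



lemma sigmaS_bound:
  assumes L: "\<forall>u\<ge>0. DERIV (\<lambda>u. u * (\<rho> (sqrt u / N))\<^sup>2) u :> deriv (\<lambda>u. u * (\<rho> (sqrt u / N))\<^sup>2) u
        \<and> \<bar>deriv (\<lambda>u. u * (\<rho> (sqrt u / N))\<^sup>2) u\<bar> \<le> L"
  shows "\<bar>sigmaS \<rho> N \<xi>1 \<xi>2\<bar> \<le> L"
proof (cases "norm \<xi>1 = norm \<xi>2")
  case True then show ?thesis using L unfolding sigmaS_def by simp
next
  case False
  define f where "f = (\<lambda>u. u * (\<rho> (sqrt u / N))\<^sup>2)"
  have fe: "norm \<xi> ^ 2 * (mult \<rho> N \<xi>)\<^sup>2 = f (norm \<xi> ^ 2)" for \<xi> :: "real^2"
    unfolding f_def mult_def by simp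
  have ne: "norm \<xi>1 ^ 2 \<noteq> norm \<xi>2 ^ 2" using False
    by (metis norm_ge_zero power2_eq_iff_nonneg)
  have "\<bar>f (norm \<xi>1 ^ 2) - f (norm \<xi>2 ^ 2)\<bar> \<le> L * \<bar>norm \<xi>1 ^ 2 - norm \<xi>2 ^ 2\<bar>"
    by (rule lip_from_deriv) (use L in \<open>simp_all add: f_def\<close>)
  moreover have "\<bar>norm \<xi>1 ^ 2 - norm \<xi>2 ^ 2\<bar> > 0" using ne by simp
  ultimately show ?thesis unfolding sigmaS_def using False
    by (simp add: fe abs_divide pos_divide_le_eq)
qed

theorem lemma3p1:
  fixes s r :: real and \<rho>1 \<rho>2 :: "real \<Rightarrow> real"
  assumes "s < 1" and "r \<le> 0"
    and "admissible_profile (1 - s) \<rho>1"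
    and "admissible_profile (- r) \<rho>2"
  shows "(\<exists>K > 0. \<exists>C. \<forall>N \<ge> K. \<forall>pm \<in> {1, -1}. \<forall>\<xi>1 \<xi>2 :: real^2.
            norm \<xi>1 \<ge> K * norm \<xi>2 \<longrightarrow>
            \<bar>sigma \<rho>1 \<rho>2 N pm \<xi>1 \<xi>2 - (mult \<rho>1 N \<xi>1)\<^sup>2\<bar>
              \<le> C * (norm \<xi>2 ^ 2 / norm \<xi>1 ^ 2 + 1 / norm \<xi>1))
       \<and> (\<forall>A \<ge> 1. \<exists>N0 C. \<forall>N \<ge> N0. \<forall>pm \<in> {1, -1}. \<forall>\<xi>1 \<xi>2 :: real^2.
            norm \<xi>2 \<le> A * norm \<xi>1 \<and> norm \<xi>1 \<le> A * norm \<xi>2 \<longrightarrow>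
            \<bar>sigma \<rho>1 \<rho>2 N pm \<xi>1 \<xi>2\<bar> \<le> C)"
proof -
  have q1: "1 - s \<ge> 0" using assms(1) by simp
  obtain L where L0: "L \<ge> 0" and L: "\<forall>N>0. \<forall>u\<ge>0. DERIV (\<lambda>u. u * (\<rho>1 (sqrt u / N))\<^sup>2) u :> deriv (\<lambda>u. u * (\<rho>1 (sqrt u / N))\<^sup>2) u
        \<and> \<bar>deriv (\<lambda>u. u * (\<rho>1 (sqrt u / N))\<^sup>2) u\<bar> \<le> L"
    using f_deriv[OF assms(3) q1] by blast
  have m1: "0 \<le> mult \<rho>1 N \<xi>" "mult \<rho>1 N \<xi> \<le> 1" for N \<xi>
    unfolding mult_def using rho_ge0[OF assms(3)] rho_le1[OF assms(3)] by auto
  have m2: "0 \<le> mult \<rho>2 N \<xi>" "mult \<rho>2 N \<xi> \<le> 1" for N \<xi>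
    unfolding mult_def using rho_ge0[OF assms(4)] rho_le1[OF assms(4)] by auto
  have P1: "\<exists>K > 0. \<exists>C. \<forall>N \<ge> K. \<forall>pm \<in> {1, -1}. \<forall>\<xi>1 \<xi>2 :: real^2.
            norm \<xi>1 \<ge> K * norm \<xi>2 \<longrightarrow>
            \<bar>sigma \<rho>1 \<rho>2 N pm \<xi>1 \<xi>2 - (mult \<rho>1 N \<xi>1)\<^sup>2\<bar>
              \<le> C * (norm \<xi>2 ^ 2 / norm \<xi>1 ^ 2 + 1 / norm \<xi>1)"
  proof (rule exI[of _ "2::real"], rule conjI, simp, rule exI[of _ "max 8 (4*(L+1))"], intro allI impI ballI)
    fix N pm :: real and \<xi>1 \<xi>2 :: "real^2"
    assume N: "2 \<le> N" and pm: "pm \<in> {1, -1}" and h: "2 * norm \<xi>2 \<le> norm \<xi>1"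
    define a b c where "a = norm \<xi>1" and "b = norm \<xi>2" and "c = norm (\<xi>1 + \<xi>2)"
    define C where "C = max 8 (4*(L+1))"
    have b0: "b \<ge> 0" "c \<ge> 0" unfolding b_def c_def by simp_all
    have cab: "c \<le> a + b" unfolding a_def b_def c_def by (rule norm_triangle_ineq)
    have h': "2*b \<le> a" using h unfolding a_def b_def .
    have R0: "b^2/a^2 + 1/a \<ge> 0" using h' b0 by simp
    have "\<bar>sigma \<rho>1 \<rho>2 N pm \<xi>1 \<xi>2 - (mult \<rho>1 N \<xi>1)\<^sup>2\<bar> \<le> C * (b^2/a^2 + 1/a)"
    proof (cases "\<bar>a^2 - b^2\<bar> > 2 * c")
      case True
      have eqZ: "sigma \<rho>1 \<rho>2 N pm \<xi>1 \<xi>2 = (a^2*(mult \<rho>1 N \<xi>1)^2 - b^2*(mult \<rho>1 N \<xi>2)^2 + pm*c*(mult \<rho>2 N (\<xi>1+\<xi>2))^2)/(a^2-b^2+pm*c)"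
        using True unfolding sigma_def sigmaZ_def a_def b_def c_def by simp
      have "\<bar>sigma \<rho>1 \<rho>2 N pm \<xi>1 \<xi>2 - (mult \<rho>1 N \<xi>1)\<^sup>2\<bar> \<le> 8*(b^2/a^2 + 1/a)"
        unfolding eqZ by (rule Z1) (use b0 h' cab True m1 m2 pm in auto)
      also have "\<dots> \<le> C * (b^2/a^2 + 1/a)" unfolding C_def using R0 by (intro mult_right_mono) auto
      finally show ?thesis .
    next
      case False
      then have sS: "sigma \<rho>1 \<rho>2 N pm \<xi>1 \<xi>2 = sigmaS \<rho>1 N \<xi>1 \<xi>2"
        unfolding sigma_def a_def b_def c_def by simp
      show ?thesis
      proof (cases "a = 0")
        case True
        then have "b = 0" using h' b0 by linarith
        then have z: "\<xi>1 = 0" "\<xi>2 = 0" using True unfolding a_def b_def by auto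
        have "sigmaS \<rho>1 N 0 0 = 1" unfolding sigmaS_def using f_deriv0[OF assms(3)] N by simp
        moreover have "mult \<rho>1 N 0 = 1" unfolding mult_def using assms(3) unfolding admissible_profile_def by simp
        ultimately show ?thesis using sS z True by simp
      next
        case False
        then have apos: "a > 0" unfolding a_def by simp
        have "(2*b)^2 \<le> a^2" by (rule power_mono) (use h' b0 in auto)
        then have "a^2 - b^2 \<ge> 3/4*a^2" by simp
        moreover have "a^2 - b^2 \<le> 3 * a" using \<open>\<not> 2*c < \<bar>a^2 - b^2\<bar>\<close> cab h' by linarith
        ultimately have "3/4*a^2 \<le> 3*a" by linarith
        then have a4: "a \<le> 4" using apos by (simp add: power2_eq_square)
        have "\<bar>sigmaS \<rho>1 N \<xi>1 \<xi>2\<bar> \<le> L" by (rule sigmaS_bound) (use L N in simp)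
        moreover have "(mult \<rho>1 N \<xi>1)\<^sup>2 \<le> 1" "(mult \<rho>1 N \<xi>1)\<^sup>2 \<ge> 0" using m1 by (simp_all add: power_le_one)
        ultimately have l1: "\<bar>sigmaS \<rho>1 N \<xi>1 \<xi>2 - (mult \<rho>1 N \<xi>1)\<^sup>2\<bar> \<le> L + 1" by linarith
        have "(L+1)*a \<le> (L+1)*4" using a4 L0 by (intro mult_left_mono) auto
        then have "L + 1 \<le> 4*(L+1) * (1/a)" using apos by (simp add: field_simps)
        also have "\<dots> \<le> C * (b^2/a^2 + 1/a)" unfolding C_def using apos
          by (intro mult_mono) auto
        finally show ?thesis using l1 sS by simp
      qed
    qed
    then show "\<bar>sigma \<rho>1 \<rho>2 N pm \<xi>1 \<xi>2 - (mult \<rho>1 N \<xi>1)\<^sup>2\<bar>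
              \<le> max 8 (4*(L+1)) * (norm \<xi>2 ^ 2 / norm \<xi>1 ^ 2 + 1 / norm \<xi>1)"
      unfolding C_def a_def b_def .
  qed
  have P2: "\<forall>A \<ge> 1. \<exists>N0 C. \<forall>N \<ge> N0. \<forall>pm \<in> {1, -1}. \<forall>\<xi>1 \<xi>2 :: real^2.
            norm \<xi>2 \<le> A * norm \<xi>1 \<and> norm \<xi>1 \<le> A * norm \<xi>2 \<longrightarrow>
            \<bar>sigma \<rho>1 \<rho>2 N pm \<xi>1 \<xi>2\<bar> \<le> C"
  proof (rule allI, rule impI, rule exI[of _ "1::real"], rule exI[of _ "2*L+1"], intro allI impI ballI)
    fix A N pm :: real and \<xi>1 \<xi>2 :: "real^2"
    assume N: "1 \<le> N" and pm: "pm \<in> {1, -1}"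
    have LN: "\<forall>u\<ge>0. DERIV (\<lambda>u. u * (\<rho>1 (sqrt u / N))\<^sup>2) u :> deriv (\<lambda>u. u * (\<rho>1 (sqrt u / N))\<^sup>2) u
        \<and> \<bar>deriv (\<lambda>u. u * (\<rho>1 (sqrt u / N))\<^sup>2) u\<bar> \<le> L" using L N by simp
    show "\<bar>sigma \<rho>1 \<rho>2 N pm \<xi>1 \<xi>2\<bar> \<le> 2*L+1"
    proof (cases "\<bar>norm \<xi>1 ^ 2 - norm \<xi>2 ^ 2\<bar> > 2 * norm (\<xi>1 + \<xi>2)")
      case True
      define f where "f = (\<lambda>u. u * (\<rho>1 (sqrt u / N))\<^sup>2)"
      have fe: "norm \<xi> ^ 2 * (mult \<rho>1 N \<xi>)\<^sup>2 = f (norm \<xi> ^ 2)" for \<xi> :: "real^2"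
        unfolding f_def mult_def by simp
      have F: "\<bar>f (norm \<xi>1 ^ 2) - f (norm \<xi>2 ^ 2)\<bar> \<le> L * \<bar>norm \<xi>1 ^ 2 - norm \<xi>2 ^ 2\<bar>"
        by (rule lip_from_deriv) (use LN in \<open>simp_all add: f_def\<close>)
      show ?thesis unfolding sigma_def sigmaZ_def using True
        apply (simp only: if_True fe)
        apply (rule Z2)
        using F True m2 pm L0 by auto
    next
      case False
      have "\<bar>sigmaS \<rho>1 N \<xi>1 \<xi>2\<bar> \<le> L" by (rule sigmaS_bound[OF LN])
      with False L0 show ?thesis unfolding sigma_def by simp
    qed
  qed
  show ?thesis using P1 P2 by blast
qed

end
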